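(* Let $f\colon\mathbb{R}^n\to\mathbb{R}$ be continuous. Suppose there is $\gamma>0$ such that (i) the set $S_\gamma=\{z\in\mathbb{R}^n : f(z)\le \inf f+\gamma\}$ is compact, and (ii) every $x\in S_\gamma$ with $0\in\partial f(x)$ is a global minimizer of $f$. Let the Moreau Adaptive Descent (MAD) parameters $x^1\in\mathbb{R}^n$, $\alpha$, $t_1,\tau,T\in(0,\infty)$, $\eta_-\in(0,1)$, $\eta_+>1$, $\theta\in(0,1)$, $\delta>0$ and an initial vector $g^0\in\mathbb{R}^n$ satisfy: $\alpha\in(1-\sqrt{\eta_-},\,1+\sqrt{\eta_-})$, and there is a global minimizer $x^\star$ of $f$ such that $t_1\ge\tau$ and $T\ge t_1\ge \|x^\star-x^1\|^2/(2\gamma)$. Let $\{x^k\}$ be generated by MAD (described in the context), with any choice of $\hat x^k\in\operatorname{prox}_{t_kf}(x^k)$ at each step. Then $$\lim_{k\to\infty} f(x^k)=\min_{x\in\mathbb{R}^n} f(x),$$ and some subsequence $\{x^{n_k}\}\subseteq\{x^k\}$ converges to a global minimizer of $f$.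
   Context: For $t>0$, $\operatorname{prox}_{tf}(x)=\operatorname{argmin}_{z\in\mathbb{R}^n}\big(f(z)+\frac{1}{2t}\|z-x\|^2\big)$ (a set) and the Moreau envelope is $u(x,t)=\inf_{z\in\mathbb{R}^n}\big(f(z)+\frac{1}{2t}\|z-x\|^2\big)$. The subdifferential $\partial f(\bar x)$ is the set of all $v\in\mathbb{R}^n$ such that $f(x)\ge f(\bar x)+\langle v,x-\bar x\rangle+o(\|x-\bar x\|)$ as $x\to\bar x$. MAD: for $k=1,2,\dots$: choose $\hat x^k\in\operatorname{prox}_{t_kf}(x^k)$; set $g^k=(x^k-\hat x^k)/t_k$; set $x^{k+1}=x^k-\alpha t_k g^k$; set $t_{k+1}=\min(\eta_+t_k,T)$ if $\|g^k\|\le\theta\|g^{k-1}\|+\delta$, and $t_{k+1}=\max(\eta_-t_k,\tau)$ otherwise. *)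

theory Defs
  imports "HOL-Analysis.Analysis"
begin

definition prox :: "real \<Rightarrow> ('a::euclidean_space \<Rightarrow> real) \<Rightarrow> 'a \<Rightarrow> 'a set" where
  "prox t f x = {z. \<forall>w. f z + (1 / (2 * t)) * (norm (z - x))\<^sup>2 \<le> f w + (1 / (2 * t)) * (norm (w - x))\<^sup>2}"

definition subdiff :: "('a::euclidean_space \<Rightarrow> real) \<Rightarrow> 'a \<Rightarrow> 'a set" where
  "subdiff f xb = {v. \<forall>\<epsilon>>0. \<exists>d>0. \<forall>y. norm (y - xb) < d \<longrightarrow>
       f y \<ge> f xb + inner v (y - xb) - \<epsilon> * norm (y - xb)}"

definition global_min :: "('a \<Rightarrow> real) \<Rightarrow> 'a \<Rightarrow> bool" where
  "global_min f z \<longleftrightarrow> (\<forall>w. f z \<le> f w)"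

text \<open>MAD iteration, indices k = 1, 2, ...; g 0 is the initial vector.\<close>
definition MAD_seq ::
  "('a::euclidean_space \<Rightarrow> real) \<Rightarrow> real \<Rightarrow> real \<Rightarrow> real \<Rightarrow> real \<Rightarrow> real \<Rightarrow> real \<Rightarrow> real
   \<Rightarrow> (nat \<Rightarrow> 'a) \<Rightarrow> (nat \<Rightarrow> 'a) \<Rightarrow> (nat \<Rightarrow> 'a) \<Rightarrow> (nat \<Rightarrow> real) \<Rightarrow> bool" where
  "MAD_seq f \<alpha> \<tau> T \<eta>m \<eta>p \<theta> \<delta> x xh g t \<longleftrightarrow>
     (\<forall>k\<ge>1. xh k \<in> prox (t k) f (x k)
        \<and> g k = (1 / t k) *\<^sub>R (x k - xh k)
        \<and> x (Suc k) = x k - (\<alpha> * t k) *\<^sub>R g k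
        \<and> t (Suc k) = (if norm (g k) \<le> \<theta> * norm (g (k - 1)) + \<delta>
                       then min (\<eta>p * t k) T else max (\<eta>m * t k) \<tau>))"

end

theory Submission
  imports Defs
begin

lemma prox_ineq:
  fixes f :: "'a::euclidean_space \<Rightarrow> real"
  assumes "h \<in> prox t f x" "t \<ge> \<tau>" "\<tau> > 0"
  shows "f h - ((norm (w - h))\<^sup>2 + 2 * norm (w - h) * norm (h - x)) / (2 * \<tau>) \<le> f w"
proof -
  have tp: "t > 0" using assms by linarith
  have P: "f h + (1 / (2 * t)) * (norm (h - x))\<^sup>2 \<le> f w + (1 / (2 * t)) * (norm (w - x))\<^sup>2"
    using assms(1) unfolding prox_def by blast
  have E: "(norm (w - x))\<^sup>2 = (norm (w - h))\<^sup>2 + 2 * inner (w - h) (h - x) + (norm (h - x))\<^sup>2"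
  proof -
    have G: "(norm (a + b))\<^sup>2 = (norm a)\<^sup>2 + 2 * inner a b + (norm b)\<^sup>2" for a b :: 'a
      by (simp add: power2_norm_eq_inner inner_add_left inner_add_right inner_commute)
    have "w - x = (w - h) + (h - x)" by simp
    then show ?thesis using G[of "w - h" "h - x"] by simp
  qed
  have CS: "inner (w - h) (h - x) \<le> norm (w - h) * norm (h - x)" by (rule norm_cauchy_schwarz)
  let ?N = "(norm (w - h))\<^sup>2 + 2 * norm (w - h) * norm (h - x)"
  have N0: "?N \<ge> 0" by simp
  have "f h \<le> f w + (1 / (2 * t)) * ((norm (w - h))\<^sup>2 + 2 * inner (w - h) (h - x))"
    using P E by (simp add: algebra_simps)
  also have "\<dots> \<le> f w + (1 / (2 * t)) * ?N"
    using CS tp by (intro add_left_mono mult_left_mono) auto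
  also have "(1 / (2 * t)) * ?N \<le> (1 / (2 * \<tau>)) * ?N"
    using N0 assms tp by (intro mult_right_mono) (auto simp: field_simps)
  finally show ?thesis by simp
qed

theorem theorem1:
  fixes f :: "'a::euclidean_space \<Rightarrow> real"
    and \<gamma> \<alpha> \<tau> T \<eta>m \<eta>p \<theta> \<delta> :: real
    and x xh g :: "nat \<Rightarrow> 'a" and t :: "nat \<Rightarrow> real"
  assumes cont: "continuous_on UNIV f"
    and gam: "\<gamma> > 0"
    and cpt: "compact {z. f z \<le> Inf (range f) + \<gamma>}"
    and crit: "\<And>z. f z \<le> Inf (range f) + \<gamma> \<Longrightarrow> 0 \<in> subdiff f z \<Longrightarrow> global_min f z"
    and pos: "\<alpha> > 0" "t 1 > 0" "\<tau> > 0" "T > 0"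
    and etam: "0 < \<eta>m" "\<eta>m < 1"
    and etap: "\<eta>p > 1"
    and th: "0 < \<theta>" "\<theta> < 1"
    and del: "\<delta> > 0"
    and alpha: "1 - sqrt \<eta>m < \<alpha>" "\<alpha> < 1 + sqrt \<eta>m"
    and xstar: "\<exists>xs. global_min f xs \<and> t 1 \<ge> \<tau> \<and> T \<ge> t 1
                   \<and> t 1 \<ge> (norm (xs - x 1))\<^sup>2 / (2 * \<gamma>)"
    and mad: "MAD_seq f \<alpha> \<tau> T \<eta>m \<eta>p \<theta> \<delta> x xh g t"
  shows "(\<lambda>k. f (x k)) \<longlonglongrightarrow> Inf (range f)
         \<and> (\<exists>r z. strict_mono r \<and> global_min f z \<and> (x \<circ> r) \<longlonglongrightarrow> z)"
proof -
  obtain xs where xs: "global_min f xs" "t 1 \<ge> \<tau>" "T \<ge> t 1"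
      "t 1 \<ge> (norm (xs - x 1))\<^sup>2 / (2 * \<gamma>)" using xstar by blast
  define m where "m = f xs"
  have fm: "\<And>w. m \<le> f w" using xs(1) unfolding global_min_def m_def by blast
  have Infm: "Inf (range f) = m"
    unfolding m_def by (rule cInf_eq_minimum) (use fm m_def in auto)
  have M: "\<And>k. xh (Suc k) \<in> prox (t (Suc k)) f (x (Suc k))
        \<and> x (Suc (Suc k)) = x (Suc k) - (\<alpha> * t (Suc k)) *\<^sub>R g (Suc k)
        \<and> g (Suc k) = (1 / t (Suc k)) *\<^sub>R (x (Suc k) - xh (Suc k))
        \<and> t (Suc (Suc k)) = (if norm (g (Suc k)) \<le> \<theta> * norm (g k) + \<delta>
                       then min (\<eta>p * t (Suc k)) T else max (\<eta>m * t (Suc k)) \<tau>)"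
    using mad unfolding MAD_seq_def by (metis diff_Suc_1 le_add1 plus_1_eq_Suc)
  have tb: "\<And>k. \<tau> \<le> t (Suc k) \<and> t (Suc k) \<le> T"
  proof -
    fix k show "\<tau> \<le> t (Suc k) \<and> t (Suc k) \<le> T"
    proof (induction k)
      case 0 then show ?case using xs by simp
    next
      case (Suc k)
      then show ?case using M[of k] etam etap xs pos
        by (auto simp: min_def max_def) (smt (verit) mult_le_cancel_right1)+
    qed
  qed
  have tpos: "\<And>k. t (Suc k) > 0" using tb pos by (meson less_le_trans)
  have tgrow: "\<And>k. \<eta>m * t (Suc k) \<le> t (Suc (Suc k))"
  proof -
    fix k
    have a: "\<eta>m * t (Suc k) \<le> t (Suc k)" using etam tpos[of k] by simp
    have b: "t (Suc k) \<le> \<eta>p * t (Suc k)" using etap tpos[of k] by simp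
    show "\<eta>m * t (Suc k) \<le> t (Suc (Suc k))"
      using M[of k] a b tb[of k] by (auto simp: min_def max_def)
  qed
  have xstep: "\<And>k. x (Suc (Suc k)) = x (Suc k) - \<alpha> *\<^sub>R (x (Suc k) - xh (Suc k))"
    using M tpos by (simp add: scaleR_scaleR) (metis less_irrefl)
  define D where "D k = (norm (xh (Suc k) - x (Suc k)))\<^sup>2" for k
  define u where "u k = f (xh (Suc k)) + D k / (2 * t (Suc k))" for k
  define c where "c = (1 - \<alpha>)\<^sup>2 / \<eta>m"
  have c1: "c < 1" "0 \<le> c"
  proof -
    have "\<bar>1 - \<alpha>\<bar> < sqrt \<eta>m" using alpha by linarith
    then have "\<bar>1 - \<alpha>\<bar>\<^sup>2 < (sqrt \<eta>m)\<^sup>2" by (intro power_strict_mono) auto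
    then have "(1 - \<alpha>)\<^sup>2 < \<eta>m" using etam by simp
    then show "c < 1" "0 \<le> c" unfolding c_def using etam by auto
  qed
  have D0: "\<And>k. D k \<ge> 0" unfolding D_def by simp
  have descent: "\<And>k. u (Suc k) \<le> u k - (1 - c) * (D k / (2 * t (Suc k)))"
  proof -
    fix k
    have P: "f (xh (Suc (Suc k))) + (1 / (2 * t (Suc (Suc k)))) * (norm (xh (Suc (Suc k)) - x (Suc (Suc k))))\<^sup>2
        \<le> f (xh (Suc k)) + (1 / (2 * t (Suc (Suc k)))) * (norm (xh (Suc k) - x (Suc (Suc k))))\<^sup>2"
      using M[of "Suc k"] unfolding prox_def by blast
    have "xh (Suc k) - x (Suc (Suc k)) = (1 - \<alpha>) *\<^sub>R (xh (Suc k) - x (Suc k))"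
      using xstep[of k] by (simp add: algebra_simps)
    then have Nq: "(norm (xh (Suc k) - x (Suc (Suc k))))\<^sup>2 = (1 - \<alpha>)\<^sup>2 * D k"
      unfolding D_def by (simp add: power_mult_distrib)
    have "(1 / (2 * t (Suc (Suc k)))) * ((1 - \<alpha>)\<^sup>2 * D k) \<le> (1 / (2 * (\<eta>m * t (Suc k)))) * ((1 - \<alpha>)\<^sup>2 * D k)"
      using tgrow[of k] tpos[of k] tpos[of "Suc k"] etam D0[of k]
      by (intro mult_right_mono) (auto simp: field_simps divide_le_eq_1)
    also have "\<dots> = c * (D k / (2 * t (Suc k)))" unfolding c_def by simp
    finally have "u (Suc k) \<le> f (xh (Suc k)) + c * (D k / (2 * t (Suc k)))"
      using P Nq unfolding u_def D_def by simp
    moreover have "(1 - c) * (D k / (2 * t (Suc k))) = D k / (2 * t (Suc k)) - c * (D k / (2 * t (Suc k)))"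
      by (simp add: left_diff_distrib diff_divide_distrib)
    ultimately show "u (Suc k) \<le> u k - (1 - c) * (D k / (2 * t (Suc k)))"
      unfolding u_def by linarith
  qed
  have ulow: "\<And>k. m \<le> u k"
    unfolding u_def using fm D0 tpos by (smt (verit) divide_nonneg_pos)
  have udec: "decseq u"
    unfolding decseq_Suc_iff using descent D0 tpos c1
    by (smt (verit) divide_nonneg_pos mult_nonneg_nonneg)
  have u0: "u 0 \<le> m + \<gamma>"
  proof -
    have P: "f (xh 1) + (1 / (2 * t 1)) * (norm (xh 1 - x 1))\<^sup>2 \<le> f xs + (1 / (2 * t 1)) * (norm (xs - x 1))\<^sup>2"
      using M[of 0] unfolding prox_def by simp
    have "(norm (xs - x 1))\<^sup>2 \<le> 2 * \<gamma> * t 1" using xs(4) gam by (simp add: field_simps)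
    then have "(1 / (2 * t 1)) * (norm (xs - x 1))\<^sup>2 \<le> \<gamma>" using pos by (simp add: field_simps)
    then show ?thesis using P unfolding u_def D_def m_def by simp
  qed
  have inS: "\<And>k. f (xh (Suc k)) \<le> m + \<gamma>"
  proof -
    fix k
    have "f (xh (Suc k)) \<le> u k" unfolding u_def using D0 tpos by (simp add: divide_nonneg_pos)
    also have "u k \<le> u 0" using udec by (simp add: decseq_def)
    finally show "f (xh (Suc k)) \<le> m + \<gamma>" using u0 by simp
  qed
  obtain L where L: "u \<longlonglongrightarrow> L" using decseq_convergent[OF udec, of m] ulow by blast
  have du: "(\<lambda>k. u k - u (Suc k)) \<longlonglongrightarrow> 0"
    using tendsto_diff[OF L L[THEN LIMSEQ_Suc]] by simp
  have Dle: "\<And>k. D k \<le> (2 * T / (1 - c)) * (u k - u (Suc k))"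
  proof -
    fix k
    have "(1 - c) * (D k / (2 * t (Suc k))) \<le> u k - u (Suc k)" using descent[of k] by simp
    then have "D k \<le> (2 * t (Suc k) / (1 - c)) * (u k - u (Suc k))"
      using c1 tpos[of k] by (simp add: field_simps)
    also have "\<dots> \<le> (2 * T / (1 - c)) * (u k - u (Suc k))"
      using c1 tb[of k] udec by (intro mult_right_mono divide_right_mono) (auto simp: decseq_Suc_iff)
    finally show "D k \<le> (2 * T / (1 - c)) * (u k - u (Suc k))" .
  qed
  have Dlim: "D \<longlonglongrightarrow> 0"
  proof (rule real_tendsto_sandwich[where f = "\<lambda>_. 0" and h = "\<lambda>k. (2 * T / (1 - c)) * (u k - u (Suc k))"])
    show "\<forall>\<^sub>F n in sequentially. 0 \<le> D n" using D0 by simp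
    show "\<forall>\<^sub>F n in sequentially. D n \<le> (2 * T / (1 - c)) * (u n - u (Suc n))" using Dle by simp
    show "(\<lambda>_. 0) \<longlonglongrightarrow> (0::real)" by simp
    show "(\<lambda>k. (2 * T / (1 - c)) * (u k - u (Suc k))) \<longlonglongrightarrow> 0"
    proof -
      have "(\<lambda>k. (2 * T / (1 - c)) * (u k - u (Suc k))) \<longlonglongrightarrow> (2 * T / (1 - c)) * 0"
        by (intro tendsto_mult tendsto_const du)
      then show ?thesis by simp
    qed
  qed
  have difflim: "(\<lambda>k. norm (xh (Suc k) - x (Suc k))) \<longlonglongrightarrow> 0"
  proof -
    have "(\<lambda>k. sqrt (D k)) \<longlonglongrightarrow> sqrt 0" by (intro tendsto_intros Dlim)
    then show ?thesis unfolding D_def by simp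
  qed
  have ic: "\<And>z. isCont f z" using cont continuous_on_eq_continuous_at[OF open_UNIV] by blast
  define S where "S = {z. f z \<le> m + \<gamma>}"
  have cS: "compact S" using cpt Infm unfolding S_def by simp
  have key: "global_min f z \<and> (\<lambda>k. x (Suc (r k))) \<longlonglongrightarrow> z"
    if r: "strict_mono r" and hz: "(\<lambda>k. xh (Suc (r k))) \<longlonglongrightarrow> z" for r z
  proof -
    have dr: "(\<lambda>k. norm (xh (Suc (r k)) - x (Suc (r k)))) \<longlonglongrightarrow> 0"
      using LIMSEQ_subseq_LIMSEQ[OF difflim r] by (simp add: o_def)
    have xz: "(\<lambda>k. x (Suc (r k))) \<longlonglongrightarrow> z"
    proof -
      have "(\<lambda>k. xh (Suc (r k)) - x (Suc (r k))) \<longlonglongrightarrow> 0"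
        using dr tendsto_norm_zero_iff by blast
      from tendsto_diff[OF hz this] show ?thesis by simp
    qed
    have fc: "(\<lambda>k. f (xh (Suc (r k)))) \<longlonglongrightarrow> f z"
      by (rule isCont_tendsto_compose[OF ic hz])
    have quad: "f z - (norm (w - z))\<^sup>2 / (2 * \<tau>) \<le> f w" for w
    proof -
      have lim: "(\<lambda>k. f (xh (Suc (r k))) - ((norm (w - xh (Suc (r k))))\<^sup>2
            + 2 * norm (w - xh (Suc (r k))) * norm (xh (Suc (r k)) - x (Suc (r k)))) / (2 * \<tau>))
          \<longlonglongrightarrow> f z - ((norm (w - z))\<^sup>2 + 2 * norm (w - z) * 0) / (2 * \<tau>)"
        by (intro tendsto_intros fc dr hz) (use pos in simp)
      have "\<forall>k. f (xh (Suc (r k))) - ((norm (w - xh (Suc (r k))))\<^sup>2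
            + 2 * norm (w - xh (Suc (r k))) * norm (xh (Suc (r k)) - x (Suc (r k)))) / (2 * \<tau>) \<le> f w"
      proof
        fix k
        have a: "xh (Suc (r k)) \<in> prox (t (Suc (r k))) f (x (Suc (r k)))" using M[of "r k"] by (rule conjunct1)
        have b: "\<tau> \<le> t (Suc (r k))" using tb[of "r k"] by (rule conjunct1)
        show "f (xh (Suc (r k))) - ((norm (w - xh (Suc (r k))))\<^sup>2
            + 2 * norm (w - xh (Suc (r k))) * norm (xh (Suc (r k)) - x (Suc (r k)))) / (2 * \<tau>) \<le> f w"
          by (rule prox_ineq[OF a b pos(3)])
      qed
      from LIMSEQ_le_const2[OF lim] this show ?thesis by simp
    qed
    have fz: "f z \<le> Inf (range f) + \<gamma>"
    proof -
      have "f z \<le> m + \<gamma>" using LIMSEQ_le_const2[OF fc] inS by blast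
      then show ?thesis using Infm by simp
    qed
    have sd: "0 \<in> subdiff f z"
      unfolding subdiff_def
    proof (intro CollectI allI impI)
      fix e :: real assume e: "0 < e"
      show "\<exists>d>0. \<forall>y. norm (y - z) < d \<longrightarrow> f y \<ge> f z + inner 0 (y - z) - e * norm (y - z)"
      proof (intro exI[of _ "2 * \<tau> * e"] conjI allI impI)
        show "0 < 2 * \<tau> * e" using e pos by simp
        fix y assume y: "norm (y - z) < 2 * \<tau> * e"
        have "(norm (y - z))\<^sup>2 / (2 * \<tau>) \<le> e * norm (y - z)"
        proof -
          have "(norm (y - z))\<^sup>2 = norm (y - z) * norm (y - z)" by (simp add: power2_eq_square)
          also have "\<dots> \<le> norm (y - z) * (2 * \<tau> * e)" using y by (intro mult_left_mono) auto
          finally show ?thesis using pos by (simp add: field_simps)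
        qed
        then show "f y \<ge> f z + inner 0 (y - z) - e * norm (y - z)" using quad[of y] by simp
      qed
    qed
    show ?thesis using crit[OF fz sd] xz by simp
  qed
  have hS: "\<And>k. xh (Suc k) \<in> S" using inS unfolding S_def by simp
  have seqc: "\<exists>l\<in>S. \<exists>r. strict_mono r \<and> ((\<lambda>k. h k) \<circ> r) \<longlonglongrightarrow> l" if "\<And>k. h k \<in> S" for h :: "nat \<Rightarrow> 'a"
  proof -
    have "seq_compact S" using cS compact_eq_seq_compact_metric by blast
    then show ?thesis using that unfolding seq_compact_def by (simp add: o_def)
  qed
  have part2: "\<exists>r z. strict_mono r \<and> global_min f z \<and> (x \<circ> r) \<longlonglongrightarrow> z"
  proof -
    obtain l r where r: "strict_mono r" "((\<lambda>k. xh (Suc k)) \<circ> r) \<longlonglongrightarrow> l"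
      using seqc[of "\<lambda>k. xh (Suc k)"] hS by blast
    have "global_min f l \<and> (\<lambda>k. x (Suc (r k))) \<longlonglongrightarrow> l" using key[OF r(1)] r(2) by (simp add: o_def)
    moreover have "strict_mono (\<lambda>k. Suc (r k))" using r(1) by (simp add: strict_mono_def)
    ultimately show ?thesis by (auto simp: o_def)
  qed
  have part1: "(\<lambda>k. f (x (Suc k))) \<longlonglongrightarrow> m"
  proof (rule ccontr)
    assume nt: "\<not> (\<lambda>k. f (x (Suc k))) \<longlonglongrightarrow> m"
    obtain e where e: "e > 0" "\<not> (\<forall>\<^sub>F k in sequentially. dist (f (x (Suc k))) m < e)"
      using nt tendsto_iff by blast
    have fr0: "frequently (\<lambda>k. \<not> dist (f (x (Suc k))) m < e) sequentially"
      using e(2) by (simp add: not_eventually)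
    have "frequently (\<lambda>k. m + e \<le> f (x (Suc k))) sequentially"
      using fr0
    proof (rule frequently_elim1)
      fix k assume "\<not> dist (f (x (Suc k))) m < e"
      then show "m + e \<le> f (x (Suc k))" using fm[of "x (Suc k)"] by (simp add: dist_real_def)
    qed
    then have "infinite {k. m + e \<le> f (x (Suc k))}"
      by (metis cofinite_eq_sequentially frequently_cofinite)
    from infinite_enumerate[OF this] obtain r :: "nat \<Rightarrow> nat" where r0: "strict_mono r"
        "\<forall>n. r n \<in> {k. m + e \<le> f (x (Suc k))}" by blast
    have r: "strict_mono r" "\<And>n. m + e \<le> f (x (Suc (r n)))" using r0 by auto
    obtain l r' where r': "strict_mono r'" "((\<lambda>k. xh (Suc (r k))) \<circ> r') \<longlonglongrightarrow> l"
      using seqc[of "\<lambda>k. xh (Suc (r k))"] hS by blast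
    have smr: "strict_mono (r \<circ> r')" using r(1) r'(1) by (simp add: strict_mono_o)
    have K: "global_min f l \<and> (\<lambda>k. x (Suc ((r \<circ> r') k))) \<longlonglongrightarrow> l"
      using key[OF smr] r'(2) by (simp add: o_def)
    then have fl: "f l = m" using fm[of l] unfolding global_min_def m_def by (meson antisym)
    have "(\<lambda>k. f (x (Suc ((r \<circ> r') k)))) \<longlonglongrightarrow> f l"
      using isCont_tendsto_compose[OF ic K[THEN conjunct2]] by (simp add: o_def)
    then have "m + e \<le> f l" using r(2) by (intro LIMSEQ_le_const) auto
    then show False using fl e by simp
  qed
  have "(\<lambda>k. f (x k)) \<longlonglongrightarrow> m" using LIMSEQ_imp_Suc[of "\<lambda>k. f (x k)"] part1 by simp
  then show ?thesis using part2 Infm by simp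
qed

end
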